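(* (Progress for $\lambda_{\mathrm{act}}$ terms.) Assume $\Gamma$ is either empty or only contains entries of the form $a_i : \mathsf{ActorRef}(A_i)$ (for names $a_i$). If $\Gamma \mid B \vdash M : A$, then either: (1) $M = \mathbf{return}\ V$ for some value $V$; or (2) $M$ can be written as $E[M']$ for an evaluation context $E$, where $M'$ is a communication or concurrency primitive, i.e. of the form $\mathbf{spawn}\ N$, $\mathbf{send}\ V\ W$, $\mathbf{receive}$, or $\mathbf{self}$; or (3) there exists some $M'$ such that $M \longrightarrow_{\mathsf{M}} M'$.
   Context: The calculus $\lambda_{\mathrm{act}}$. Types: $A,B,C ::= \mathbf{1} \mid A \xrightarrow{C} B \mid \mathsf{ActorRef}(A)$. $\alpha$ ranges over variables $x$ and names $a$. Values $V,W ::= \alpha \mid \lambda x.M \mid ()$. Computations $M,N ::= V\,W \mid \mathbf{let}\ x \Leftarrow M\ \mathbf{in}\ N \mid \mathbf{return}\ V \mid \mathbf{spawn}\ M \mid \mathbf{send}\ V\ W \mid \mathbf{receive} \mid \mathbf{self}$. Value typing $\Gamma\vdash V:A$: $\Gamma\vdash\alpha:A$ if $\alpha:A\in\Gamma$; $\Gamma\vdash\lambda x.M : A\xrightarrow{C}B$ if $\Gamma,x:A\mid C\vdash M:B$; $\Gamma\vdash():\mathbf 1$. Computation typing $\Gamma\mid C\vdash M:A$ ($C$ is the mailbox type): $\Gamma\mid C\vdash V\,W:B$ if $\Gamma\vdash V:A\xrightarrow{C}B$ and $\Gamma\vdash W:A$; $\Gamma\mid C\vdash\mathbf{let}\ x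 \Leftarrow M\ \mathbf{in}\ N : B$ if $\Gamma\mid C\vdash M:A$ and $\Gamma,x:A\mid C\vdash N:B$; $\Gamma\mid C\vdash \mathbf{return}\ V:A$ if $\Gamma\vdash V:A$; $\Gamma\mid C\vdash\mathbf{send}\ V\ W:\mathbf 1$ if $\Gamma\vdash V:A$ and $\Gamma\vdash W:\mathsf{ActorRef}(A)$; $\Gamma\mid A\vdash\mathbf{receive}:A$; $\Gamma\mid C\vdash\mathbf{spawn}\ M:\mathsf{ActorRef}(A)$ if $\Gamma\mid A\vdash M:\mathbf 1$; $\Gamma\mid A\vdash\mathbf{self}:\mathsf{ActorRef}(A)$. Evaluation contexts $E ::= [\,] \mid \mathbf{let}\ x \Leftarrow E\ \mathbf{in}\ M$. Term reduction $\longrightarrow_{\mathsf{M}}$: $(\lambda x.M)V\longrightarrow_{\mathsf{M}} M\{V/x\}$; $\mathbf{let}\ x \Leftarrow \mathbf{return}\ V\ \mathbf{in}\ M \longrightarrow_{\mathsf{M}} M\{V/x\}$; $E[M]\longrightarrow_{\mathsf{M}} E[M']$ if $M\longrightarrow_{\mathsf{M}} M'$. *)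

theory Defs
  imports Main
begin

type_synonym var = string
type_synonym name = nat

datatype ty = Unit | Fun ty ty ty | ActorRef ty
  (* Fun A C B  stands for  A -C-> B *)

datatype atom = Var var | Nm name

datatype val = VAtom atom | Lam var comp | UnitV
and comp = App val val | Let var comp comp | Return val | Spawn comp
         | Send val val | Receive | Self

type_synonym env = "atom \<Rightarrow> ty option"

inductive vtyping :: "env \<Rightarrow> val \<Rightarrow> ty \<Rightarrow> bool"
  and ctyping :: "env \<Rightarrow> ty \<Rightarrow> comp \<Rightarrow> ty \<Rightarrow> bool" where
  T_Atom: "\<Gamma> \<alpha> = Some A \<Longrightarrow> vtyping \<Gamma> (VAtom \<alpha>) A"
| T_Lam: "ctyping (\<Gamma>(Var x \<mapsto> A)) C M B \<Longrightarrow> vtyping \<Gamma> (Lam x M) (Fun A C B)"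
| T_Unit: "vtyping \<Gamma> UnitV Unit"
| T_App: "vtyping \<Gamma> V (Fun A C B) \<Longrightarrow> vtyping \<Gamma> W A \<Longrightarrow> ctyping \<Gamma> C (App V W) B"
| T_Let: "ctyping \<Gamma> C M A \<Longrightarrow> ctyping (\<Gamma>(Var x \<mapsto> A)) C N B \<Longrightarrow> ctyping \<Gamma> C (Let x M N) B"
| T_Return: "vtyping \<Gamma> V A \<Longrightarrow> ctyping \<Gamma> C (Return V) A"
| T_Send: "vtyping \<Gamma> V A \<Longrightarrow> vtyping \<Gamma> W (ActorRef A) \<Longrightarrow> ctyping \<Gamma> C (Send V W) Unit"
| T_Receive: "ctyping \<Gamma> A Receive A"
| T_Spawn: "ctyping \<Gamma> A M Unit \<Longrightarrow> ctyping \<Gamma> C (Spawn M) (ActorRef A)"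
| T_Self: "ctyping \<Gamma> A Self (ActorRef A)"

fun vsubst :: "val \<Rightarrow> var \<Rightarrow> val \<Rightarrow> val"
  and csubst :: "comp \<Rightarrow> var \<Rightarrow> val \<Rightarrow> comp" where
  "vsubst (VAtom (Var y)) x V = (if y = x then V else VAtom (Var y))"
| "vsubst (VAtom (Nm a)) x V = VAtom (Nm a)"
| "vsubst (Lam y M) x V = (if y = x then Lam y M else Lam y (csubst M x V))"
| "vsubst UnitV x V = UnitV"
| "csubst (App W1 W2) x V = App (vsubst W1 x V) (vsubst W2 x V)"
| "csubst (Let y M N) x V = Let y (csubst M x V) (if y = x then N else csubst N x V)"
| "csubst (Return W) x V = Return (vsubst W x V)"
| "csubst (Spawn M) x V = Spawn (csubst M x V)"
| "csubst (Send W1 W2) x V = Send (vsubst W1 x V) (vsubst W2 x V)"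
| "csubst Receive x V = Receive"
| "csubst Self x V = Self"

datatype ectx = Hole | ELet var ectx comp

fun plug :: "ectx \<Rightarrow> comp \<Rightarrow> comp" where
  "plug Hole M = M"
| "plug (ELet x E N) M = Let x (plug E M) N"

inductive mred :: "comp \<Rightarrow> comp \<Rightarrow> bool" where
  R_Beta: "mred (App (Lam x M) V) (csubst M x V)"
| R_Let: "mred (Let x (Return V) M) (csubst M x V)"
| R_Ctx: "mred M M' \<Longrightarrow> mred (plug E M) (plug E M')"

definition comm_prim :: "comp \<Rightarrow> bool" where
  "comm_prim M \<longleftrightarrow> (\<exists>N. M = Spawn N) \<or> (\<exists>V W. M = Send V W) \<or> M = Receive \<or> M = Self"

end

theory Submission
  imports Defs
begin

lemma fun_val:
  assumes "\<forall>\<alpha> T. \<Gamma> \<alpha> = Some T \<longrightarrow> (\<exists>a A. \<alpha> = Nm a \<and> T = ActorRef A)"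
    and "vtyping \<Gamma> V (Fun A C B)"
  shows "\<exists>x M. V = Lam x M"
  using assms(2) apply (cases rule: vtyping.cases)
  using assms(1) by auto

lemma prog:
  assumes "\<forall>\<alpha> T. \<Gamma> \<alpha> = Some T \<longrightarrow> (\<exists>a A. \<alpha> = Nm a \<and> T = ActorRef A)"
  shows "ctyping \<Gamma> B M A \<Longrightarrow> (\<exists>V. M = Return V)
       \<or> (\<exists>E M'. M = plug E M' \<and> comm_prim M')
       \<or> (\<exists>M'. mred M M')"
proof (induction M arbitrary: A rule: comp.induct[of "\<lambda>_. True"])
  case (App V W)
  then obtain A' where "vtyping \<Gamma> V (Fun A' B A)" by (auto elim: ctyping.cases)
  with fun_val[OF assms] obtain x N where "V = Lam x N" by blast
  then show ?case using R_Beta by blast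
next
  case (Let x M N)
  then obtain A' where t: "ctyping \<Gamma> B M A'" by (auto elim: ctyping.cases)
  from Let.IH(1)[OF t] show ?case
  proof (elim disjE exE conjE)
    fix V assume "M = Return V" then show ?thesis using R_Let by blast
  next
    fix E M' assume "M = plug E M'" "comm_prim M'"
    then have "Let x M N = plug (ELet x E N) M'" by simp
    then show ?thesis using \<open>comm_prim M'\<close> by blast
  next
    fix M' assume "mred M M'"
    from R_Ctx[OF this, of "ELet x Hole N"] show ?thesis by auto
  qed
next
  case (Spawn M) then show ?case unfolding comm_prim_def by (metis plug.simps(1))
next
  case (Send V W) then show ?case unfolding comm_prim_def by (metis plug.simps(1))
next
  case Receive then show ?case unfolding comm_prim_def by (metis plug.simps(1))
next
  case Self then show ?case unfolding comm_prim_def by (metis plug.simps(1))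
qed auto

theorem lemma10:
  assumes "\<forall>\<alpha> T. \<Gamma> \<alpha> = Some T \<longrightarrow> (\<exists>a A. \<alpha> = Nm a \<and> T = ActorRef A)"
    and "ctyping \<Gamma> B M A"
  shows "(\<exists>V. M = Return V)
       \<or> (\<exists>E M'. M = plug E M' \<and> comm_prim M')
       \<or> (\<exists>M'. mred M M')"
  using prog[OF assms(1) assms(2)] .

end
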